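(* Let $\lambda>0$ and $\rho_1,\rho_2\in(0,1)$ with $\rho_1+\rho_2=1$. For an entropy generator $\psi$ consider the condition $$\sum_{j=1}^2\psi''\Big(\frac{u_j}{\rho_j}\Big)\frac1{\rho_j}(\rho_j-u_j)^2\ \ge\ \frac{\mu}{2\lambda}\sum_{j=1}^2\psi'\Big(\frac{u_j}{\rho_j}\Big)(u_j-\rho_j)\quad\text{for all }u\in[0,1]^2,\ u_1+u_2=1.$$ This condition holds with $$1\ge\frac{\mu}{2\lambda}=\begin{cases}1 & \text{for }\psi=\psi_2,\\ 2\min\{\rho_1,\rho_2\} & \text{for }\psi=\psi_3,\\ 2-2\sqrt{1-3\rho_2(1-\rho_2)}>0 & \text{for }\psi=\psi_4.\end{cases}$$
   Context: For $p>1$, $\psi_p(\sigma)=\sigma^p-1-p(\sigma-1)$ on $\sigma\ge0$. *)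

theory Defs
  imports "HOL-Analysis.Analysis"
begin

text \<open>Entropy generator psi_p(s) = s^p - 1 - p(s - 1); only integer p (2,3,4) are needed.
  It is a polynomial, so we take it on all of the reals; derivatives are the usual ones.\<close>
definition psi :: "nat \<Rightarrow> real \<Rightarrow> real" where
  "psi p s = s ^ p - 1 - real p * (s - 1)"

definition entropy_cond :: "(real \<Rightarrow> real) \<Rightarrow> real \<Rightarrow> real \<Rightarrow> real \<Rightarrow> real \<Rightarrow> bool" where
  "entropy_cond \<psi> \<rho>1 \<rho>2 \<mu> lam \<longleftrightarrow>
    (\<forall>u1 u2. 0 \<le> u1 \<and> u1 \<le> 1 \<and> 0 \<le> u2 \<and> u2 \<le> 1 \<and> u1 + u2 = 1 \<longrightarrow>
      deriv (deriv \<psi>) (u1 / \<rho>1) * (1 / \<rho>1) * (\<rho>1 - u1)^2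
      + deriv (deriv \<psi>) (u2 / \<rho>2) * (1 / \<rho>2) * (\<rho>2 - u2)^2
      \<ge> \<mu> / (2 * lam) * (deriv \<psi> (u1 / \<rho>1) * (u1 - \<rho>1) + deriv \<psi> (u2 / \<rho>2) * (u2 - \<rho>2)))"

end

theory Submission
  imports Defs
begin

lemma dpsi: "deriv (psi p) = (\<lambda>x. real p * x^(p-1) - real p)"
proof
  fix x show "deriv (psi p) x = real p * x^(p-1) - real p"
    unfolding psi_def by (rule DERIV_imp_deriv) (auto intro!: derivative_eq_intros)
qed

lemma ddpsi: "deriv (deriv (psi p)) = (\<lambda>x. real p * (real (p-1) * x^(p-1-1)))"
proof
  fix x show "deriv (deriv (psi p)) x = real p * (real (p-1) * x^(p-1-1))"
    unfolding dpsi by (rule DERIV_imp_deriv) (auto intro!: derivative_eq_intros)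
qed

lemma h4:
  fixes r1 r2 w q :: real
  assumes "r1 > 0" "r2 > 0" "r1 + r2 = 1" "q \<ge> 0" "q^2 = 1 - 3*r2*(1-r2)"
  shows "(1+2*q)*q^2*w^2 + 6*q*(r2-r1)*w + (6*q-3) \<ge> 0"
proof -
  have qp: "q > 0"
  proof -
    have "0 \<le> (r2 - 1/2)^2" by simp
    then have "r2*(1-r2) \<le> 1/4" by (simp add: power2_eq_square algebra_simps)
    then have "q^2 > 0" using assms by linarith
    then show ?thesis using assms(4) by (metis less_eq_real_def power_zero_numeral)
  qed
  have A: "(1+2*q)*q^2 > 0" using qp by (simp add: add_pos_pos)
  have r1e: "r1 = 1 - r2" using assms by simp
  have d2: "3*(r2 - r1)^2 = 4*q^2-1" unfolding assms(5) r1e by (simp add: power2_eq_square algebra_simps)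
  have key: "4*((1+2*q)*q^2) * ((1+2*q)*q^2*w^2 + 6*q*(r2-r1)*w + (6*q-3))
      = (2*((1+2*q)*q^2)*w + 6*q*(r2-r1))^2 + (4*(1+2*q)*q^2*(6*q-3) - 36*q^2*(r2-r1)^2)"
    by (simp add: power2_eq_square algebra_simps)
  have "4*(1+2*q)*q^2*(6*q-3) - 36*q^2*(r2-r1)^2 = 0"
  proof -
    have "36*q^2*(r2-r1)^2 = 12*q^2*(3*(r2-r1)^2)" by simp
    also have "\<dots> = 12*q^2*(4*q^2-1)" using d2 by simp
    finally show ?thesis by (simp add: power2_eq_square algebra_simps)
  qed
  from key this have "4*((1+2*q)*q^2) * ((1+2*q)*q^2*w^2 + 6*q*(r2-r1)*w + (6*q-3)) \<ge> 0" by (metis add_0_right zero_le_power2)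
  then have "0 \<le> ((1+2*q)*q^2) * ((1+2*q)*q^2*w^2 + 6*q*(r2-r1)*w + (6*q-3))" by (simp only: mult.assoc)
  then show ?thesis using A by (metis zero_le_mult_iff not_less)
qed

theorem lemma1:
  fixes lam \<rho>1 \<rho>2 \<mu> :: real
  assumes "lam > 0" and "0 < \<rho>1" and "\<rho>1 < 1" and "0 < \<rho>2" and "\<rho>2 < 1"
    and "\<rho>1 + \<rho>2 = 1"
  shows "(\<mu> / (2 * lam) = 1 \<longrightarrow> entropy_cond (psi 2) \<rho>1 \<rho>2 \<mu> lam)
    \<and> (\<mu> / (2 * lam) = 2 * min \<rho>1 \<rho>2 \<longrightarrow> entropy_cond (psi 3) \<rho>1 \<rho>2 \<mu> lam)
    \<and> (\<mu> / (2 * lam) = 2 - 2 * sqrt (1 - 3 * \<rho>2 * (1 - \<rho>2))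
         \<longrightarrow> entropy_cond (psi 4) \<rho>1 \<rho>2 \<mu> lam)
    \<and> 2 * min \<rho>1 \<rho>2 \<le> 1
    \<and> 2 - 2 * sqrt (1 - 3 * \<rho>2 * (1 - \<rho>2)) \<le> 1
    \<and> 2 - 2 * sqrt (1 - 3 * \<rho>2 * (1 - \<rho>2)) > 0"
proof -
  note r = assms(2-6)
  define S where "S = 1 - 3 * \<rho>2 * (1 - \<rho>2)"
  have "0 \<le> (\<rho>2 - 1/2)^2" by simp
  then have S14: "S \<ge> 1/4" unfolding S_def by (simp add: power2_eq_square algebra_simps)
  have S1: "S < 1" unfolding S_def using r by (simp add: mult_pos_pos)
  have sq14: "sqrt S \<ge> 1/2" using S14 real_sqrt_le_mono[of "1/4" S] by (simp add: real_sqrt_divide)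
  have sq1: "sqrt S < 1" using S1 by simp
  have sub: "\<exists>w. u1/\<rho>1 = 1 + \<rho>2*w \<and> u2/\<rho>2 = 1 - \<rho>1*w \<and> (1/\<rho>1)*(\<rho>1-u1)^2 = \<rho>1*\<rho>2^2*w^2
      \<and> (1/\<rho>2)*(\<rho>2-u2)^2 = \<rho>1^2*\<rho>2*w^2 \<and> u1 - \<rho>1 = \<rho>1*\<rho>2*w \<and> u2 - \<rho>2 = -(\<rho>1*\<rho>2*w)
      \<and> -1 \<le> \<rho>2*w \<and> \<rho>1*w \<le> 1"
    if "0 \<le> u1" "u1 \<le> 1" "0 \<le> u2" "u2 \<le> 1" "u1 + u2 = 1" for u1 u2
  proof (intro exI conjI)
    define w where "w = (u1 - \<rho>1)/(\<rho>1*\<rho>2)"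
    have u1: "u1 = \<rho>1 + \<rho>1*\<rho>2*w" unfolding w_def using r by simp
    have u2: "u2 = \<rho>2 - \<rho>1*\<rho>2*w" using u1 that(5) r(5) by linarith
    show "u1/\<rho>1 = 1 + \<rho>2*w" unfolding u1 using r by (simp add: field_simps)
    show "u2/\<rho>2 = 1 - \<rho>1*w" unfolding u2 using r by (simp add: field_simps)
    show "(1/\<rho>1)*(\<rho>1-u1)^2 = \<rho>1*\<rho>2^2*w^2" unfolding u1 using r by (simp add: field_simps power2_eq_square)
    show "(1/\<rho>2)*(\<rho>2-u2)^2 = \<rho>1^2*\<rho>2*w^2" unfolding u2 using r by (simp add: field_simps power2_eq_square)
    show "u1 - \<rho>1 = \<rho>1*\<rho>2*w" unfolding u1 by simp
    show "u2 - \<rho>2 = -(\<rho>1*\<rho>2*w)" unfolding u2 by simp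
    have "0 \<le> \<rho>1 * (1 + \<rho>2*w)" using u1 that(1) by (simp add: algebra_simps)
    then show "-1 \<le> \<rho>2*w" using r by (simp add: zero_le_mult_iff)
    have "0 \<le> \<rho>2 * (1 - \<rho>1*w)" using u2 that(3) by (simp add: algebra_simps)
    then show "\<rho>1*w \<le> 1" using r by (simp add: zero_le_mult_iff)
  qed
  have c2: "entropy_cond (psi 2) \<rho>1 \<rho>2 \<mu> lam" if "\<mu> / (2 * lam) = 1"
    unfolding entropy_cond_def ddpsi unfolding dpsi that
    apply (intro allI impI)
    subgoal for u1 u2
  proof -
    assume h: "0 \<le> u1 \<and> u1 \<le> 1 \<and> 0 \<le> u2 \<and> u2 \<le> 1 \<and> u1 + u2 = 1"
    then obtain w where e1: "u1/\<rho>1 = 1 + \<rho>2*w" and e2: "u2/\<rho>2 = 1 - \<rho>1*w" and e3: "(1/\<rho>1)*(\<rho>1-u1)^2 = \<rho>1*\<rho>2^2*w^2"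
      and e4: "(1/\<rho>2)*(\<rho>2-u2)^2 = \<rho>1^2*\<rho>2*w^2" and e5: "u1 - \<rho>1 = \<rho>1*\<rho>2*w" and e6: "u2 - \<rho>2 = -(\<rho>1*\<rho>2*w)"
      and b1: "-1 \<le> \<rho>2*w" and b2: "\<rho>1*w \<le> 1" using sub by blast
    show ?thesis
      unfolding mult.assoc e1 e2 e3 e4 e5 e6
      by (simp add: power2_eq_square algebra_simps)
  qed
  done
  have c3: "entropy_cond (psi 3) \<rho>1 \<rho>2 \<mu> lam" if "\<mu> / (2 * lam) = 2 * min \<rho>1 \<rho>2"
    unfolding entropy_cond_def ddpsi unfolding dpsi that
    apply (intro allI impI)
    subgoal for u1 u2
  proof -
    assume h: "0 \<le> u1 \<and> u1 \<le> 1 \<and> 0 \<le> u2 \<and> u2 \<le> 1 \<and> u1 + u2 = 1"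
    then obtain w where e1: "u1/\<rho>1 = 1 + \<rho>2*w" and e2: "u2/\<rho>2 = 1 - \<rho>1*w" and e3: "(1/\<rho>1)*(\<rho>1-u1)^2 = \<rho>1*\<rho>2^2*w^2"
      and e4: "(1/\<rho>2)*(\<rho>2-u2)^2 = \<rho>1^2*\<rho>2*w^2" and e5: "u1 - \<rho>1 = \<rho>1*\<rho>2*w" and e6: "u2 - \<rho>2 = -(\<rho>1*\<rho>2*w)"
      and b1: "-1 \<le> \<rho>2*w" and b2: "\<rho>1*w \<le> 1" using sub by blast
    show ?thesis
      unfolding mult.assoc e1 e2 e3 e4 e5 e6
      apply simp
    proof -
      have r1e: "\<rho>1 = 1 - \<rho>2" using r by simp
      have F: "0 \<le> 2 - 2*(2*min \<rho>1 \<rho>2) + (2-2*min \<rho>1 \<rho>2)*w*(\<rho>2-\<rho>1)"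
      proof (cases "\<rho>1 \<le> \<rho>2")
        case True
        then have "2 - 2*(2*min \<rho>1 \<rho>2) + (2-2*min \<rho>1 \<rho>2)*w*(\<rho>2-\<rho>1) = 2*(\<rho>2-\<rho>1)*(1+\<rho>2*w)"
          unfolding r1e by (simp add: min_def algebra_simps)
        moreover have "0 \<le> 2*(\<rho>2-\<rho>1)*(1+\<rho>2*w)" using True b1 by simp
        ultimately show ?thesis by simp
      next
        case False
        then have "2 - 2*(2*min \<rho>1 \<rho>2) + (2-2*min \<rho>1 \<rho>2)*w*(\<rho>2-\<rho>1) = 2*(\<rho>1-\<rho>2)*(1-\<rho>1*w)"
          unfolding r1e by (simp add: min_def algebra_simps)
        moreover have "0 \<le> 2*(\<rho>1-\<rho>2)*(1-\<rho>1*w)" using False b2 by simp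
        ultimately show ?thesis by simp
      qed
      have P: "0 \<le> 3*\<rho>1*\<rho>2*w^2*(2 - 2*(2*min \<rho>1 \<rho>2) + (2-2*min \<rho>1 \<rho>2)*w*(\<rho>2-\<rho>1))"
        using F r by simp
      have I: "6 * ((1 + \<rho>2 * w) * (\<rho>1 * (\<rho>2^2 * w^2))) + 6 * ((1 - \<rho>1 * w) * (\<rho>1^2 * (\<rho>2 * w^2)))
         - 2 * (min \<rho>1 \<rho>2 * ((3 * (1 + \<rho>2 * w)^2 - 3) * (\<rho>1 * (\<rho>2 * w)) - (3 * (1 - \<rho>1 * w)^2 - 3) * (\<rho>1 * (\<rho>2 * w))))
         = 3*\<rho>1*\<rho>2*w^2*(2 - 2*(2*min \<rho>1 \<rho>2) + (2-2*min \<rho>1 \<rho>2)*w*(\<rho>2-\<rho>1))"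
        unfolding r1e by (simp add: power2_eq_square algebra_simps)
      show "2 * (min \<rho>1 \<rho>2 * ((3 * (1 + \<rho>2 * w)^2 - 3) * (\<rho>1 * (\<rho>2 * w)) - (3 * (1 - \<rho>1 * w)^2 - 3) * (\<rho>1 * (\<rho>2 * w))))
         \<le> 6 * ((1 + \<rho>2 * w) * (\<rho>1 * (\<rho>2^2 * w^2))) + 6 * ((1 - \<rho>1 * w) * (\<rho>1^2 * (\<rho>2 * w^2)))"
        using I P by linarith
    qed
  qed
  done
  have c4: "entropy_cond (psi 4) \<rho>1 \<rho>2 \<mu> lam" if "\<mu> / (2 * lam) = 2 - 2 * sqrt (1 - 3 * \<rho>2 * (1 - \<rho>2))"
    unfolding entropy_cond_def ddpsi unfolding dpsi that
    apply (intro allI impI)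
    subgoal for u1 u2
  proof -
    assume h: "0 \<le> u1 \<and> u1 \<le> 1 \<and> 0 \<le> u2 \<and> u2 \<le> 1 \<and> u1 + u2 = 1"
    then obtain w where e1: "u1/\<rho>1 = 1 + \<rho>2*w" and e2: "u2/\<rho>2 = 1 - \<rho>1*w" and e3: "(1/\<rho>1)*(\<rho>1-u1)^2 = \<rho>1*\<rho>2^2*w^2"
      and e4: "(1/\<rho>2)*(\<rho>2-u2)^2 = \<rho>1^2*\<rho>2*w^2" and e5: "u1 - \<rho>1 = \<rho>1*\<rho>2*w" and e6: "u2 - \<rho>2 = -(\<rho>1*\<rho>2*w)"
      and b1: "-1 \<le> \<rho>2*w" and b2: "\<rho>1*w \<le> 1" using sub by blast
    show ?thesis
      unfolding mult.assoc e1 e2 e3 e4 e5 e6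
      apply simp
    proof -
      have r1e: "\<rho>1 = 1 - \<rho>2" using r by simp
      define q where "q = sqrt (1 - 3 * (\<rho>2 * (1 - \<rho>2)))"
      have Sn: "0 \<le> 1 - 3 * (\<rho>2 * (1 - \<rho>2))" proof -
        have "S = 1 - 3 * (\<rho>2 * (1 - \<rho>2))" unfolding S_def by (simp only: mult.assoc)
        then show ?thesis using S14 by linarith
      qed
      have q0: "q \<ge> 0" unfolding q_def using Sn by simp
      have qq: "q^2 = 1 - 3*\<rho>2*(1-\<rho>2)" unfolding q_def using Sn by simp
      have cub: "\<rho>1^3 + \<rho>2^3 = q^2" unfolding qq r1e by (simp add: power3_eq_cube algebra_simps)
      have H: "0 \<le> (1+2*q)*q^2*w^2 + 6*q*(\<rho>2-\<rho>1)*w + (6*q-3)"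
        by (rule h4) (use r q0 qq in auto)
      have P: "0 \<le> 4*\<rho>1*\<rho>2*w^2*((1+2*q)*q^2*w^2 + 6*q*(\<rho>2-\<rho>1)*w + (6*q-3))"
        using H r by simp
      have I0: "12 * ((1 + \<rho>2 * w)^2 * (\<rho>1 * (\<rho>2^2 * w^2))) + 12 * ((1 - \<rho>1 * w)^2 * (\<rho>1^2 * (\<rho>2 * w^2)))
         - (2 - 2 * q) * ((4 * (1 + \<rho>2 * w) ^ 3 - 4) * (\<rho>1 * (\<rho>2 * w)) - (4 * (1 - \<rho>1 * w) ^ 3 - 4) * (\<rho>1 * (\<rho>2 * w)))
         = 4*\<rho>1*\<rho>2*w^2*((1+2*q)*(\<rho>1^3 + \<rho>2^3)*w^2 + 6*q*(\<rho>2-\<rho>1)*w + (6*q-3))"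
        unfolding r1e by (simp add: power2_eq_square power3_eq_cube algebra_simps)
      have I: "12 * ((1 + \<rho>2 * w)^2 * (\<rho>1 * (\<rho>2^2 * w^2))) + 12 * ((1 - \<rho>1 * w)^2 * (\<rho>1^2 * (\<rho>2 * w^2)))
         - (2 - 2 * q) * ((4 * (1 + \<rho>2 * w) ^ 3 - 4) * (\<rho>1 * (\<rho>2 * w)) - (4 * (1 - \<rho>1 * w) ^ 3 - 4) * (\<rho>1 * (\<rho>2 * w)))
         = 4*\<rho>1*\<rho>2*w^2*((1+2*q)*q^2*w^2 + 6*q*(\<rho>2-\<rho>1)*w + (6*q-3))"
        using I0 unfolding cub .
      show "(2 - 2 * sqrt (1 - 3 * (\<rho>2 * (1 - \<rho>2)))) * ((4 * (1 + \<rho>2 * w) ^ 3 - 4) * (\<rho>1 * (\<rho>2 * w)) - (4 * (1 - \<rho>1 * w) ^ 3 - 4) * (\<rho>1 * (\<rho>2 * w)))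
         \<le> 12 * ((1 + \<rho>2 * w)^2 * (\<rho>1 * (\<rho>2^2 * w^2))) + 12 * ((1 - \<rho>1 * w)^2 * (\<rho>1^2 * (\<rho>2 * w^2)))"
        using I P unfolding q_def by linarith
    qed
  qed
  done
  have m: "2 * min \<rho>1 \<rho>2 \<le> 1" using r by (simp add: min_def)
  have sS: "sqrt (1 - 3 * \<rho>2 * (1 - \<rho>2)) = sqrt S" unfolding S_def ..
  show ?thesis using c2 c3 c4 m sq14 sq1 unfolding sS by auto
qed

end
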